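(* Let $n\ge 3$ and let $\gamma,\delta\in\mathbb{R}$ be arbitrary. Define $P(\rho) = -\frac{2n+\delta}{n(n-1)} + \frac{(\delta-\gamma)\rho}{n(n+1)} + \frac{\gamma\rho^2}{(n+1)(n+2)}$, $\alpha = -1 - \frac{\delta}{n(n+1)} - \frac{\gamma}{(n+1)(n+2)}$, $\beta = \frac{n+1}{n-1} + \frac{\delta}{n(n-1)} + \frac{\gamma}{n(n+1)}$, and $Q(\rho) = \rho^{n-1} - \rho^n - \rho^nP(\rho) - \alpha - \beta\rho$. Then: (1) the polynomial $\rho^{n+1} - \rho^n + \rho^nP(\rho) + \alpha + \beta\rho$ has a zero of order at least $3$ at $\rho=1$; (2) $Q(1) = Q'(1) = 0$ and $Q''(1) = 2$; in particular $Q$ has a zero of order exactly $2$ at $\rho=1$. In particular, $\rho=1$ is a removable singularity of the rational function $h''(\rho) = \frac{\rho^{n+1} - \rho^n + \rho^nP(\rho) + \alpha + \beta\rho}{(1-\rho)\rho\,Q(\rho)}$. *)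

theory Defs
  imports Complex_Main "HOL-Computational_Algebra.Polynomial"
begin

definition Ppoly :: "nat \<Rightarrow> real \<Rightarrow> real \<Rightarrow> real poly" where
  "Ppoly n \<gamma> \<delta> =
     [: - (2 * real n + \<delta>) / (real n * (real n - 1)),
        (\<delta> - \<gamma>) / (real n * (real n + 1)),
        \<gamma> / ((real n + 1) * (real n + 2)) :]"

definition alpha :: "nat \<Rightarrow> real \<Rightarrow> real \<Rightarrow> real" where
  "alpha n \<gamma> \<delta> = -1 - \<delta> / (real n * (real n + 1)) - \<gamma> / ((real n + 1) * (real n + 2))"

definition beta :: "nat \<Rightarrow> real \<Rightarrow> real \<Rightarrow> real" where
  "beta n \<gamma> \<delta> = (real n + 1) / (real n - 1) + \<delta> / (real n * (real n - 1))
                    + \<gamma> / (real n * (real n + 1))"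

definition Npoly :: "nat \<Rightarrow> real \<Rightarrow> real \<Rightarrow> real poly" where
  "Npoly n \<gamma> \<delta> = monom 1 (n + 1) - monom 1 n + monom 1 n * Ppoly n \<gamma> \<delta>
                    + [: alpha n \<gamma> \<delta>, beta n \<gamma> \<delta> :]"

definition Qpoly :: "nat \<Rightarrow> real \<Rightarrow> real \<Rightarrow> real poly" where
  "Qpoly n \<gamma> \<delta> = monom 1 (n - 1) - monom 1 n - monom 1 n * Ppoly n \<gamma> \<delta>
                    - [: alpha n \<gamma> \<delta>, beta n \<gamma> \<delta> :]"

end

theory Submission imports Defs begin
lemma monom_mult3: "monom (1::real) n * [:a,b,c:] = monom a n + monom b (n+1) + monom c (n+2)"
  by (rule poly_ext) (simp add: poly_monom algebra_simps)
lemma Pform: "Ppoly n g d = [: - (2 * real n + d) / (real n * (real n - 1)),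
        (d - g) / (real n * (real n + 1)),
        g / ((real n + 1) * (real n + 2)) :]" by (simp add: Ppoly_def)
lemma Qform: "Qpoly n g d = monom 1 (n-1) - monom (1 - (2 * real n + d) / (real n * (real n - 1))) n
   - monom ((d - g) / (real n * (real n + 1))) (n+1) - monom (g / ((real n + 1) * (real n + 2))) (n+2) - [: alpha n g d, beta n g d :]"
proof -
  have "monom 1 n * Ppoly n g d = monom (- (2 * real n + d) / (real n * (real n - 1))) n + monom ((d - g) / (real n * (real n + 1))) (n+1) + monom (g / ((real n + 1) * (real n + 2))) (n+2)"
    unfolding Pform monom_mult3 ..
  moreover have "monom 1 n + monom (- (2 * real n + d) / (real n * (real n - 1))) n = monom (1 - (2 * real n + d) / (real n * (real n - 1))) n"
    by (simp only: add_monom minus_divide_left[symmetric] diff_conv_add_uminus)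
  ultimately show ?thesis unfolding Qpoly_def by (metis (no_types, lifting) diff_diff_eq add.assoc)
qed
lemma gen0: "poly (monom 1 m - monom a n - monom b (n+1) - monom c (n+2) - [:al, be:]) (1::real)
   = 1 - a - b - c - al - be"
  by (simp add: poly_monom)
lemma gen1: assumes "x = real n" "real n = real m + 1"
  shows "poly (pderiv (monom 1 m - monom a n - monom b (n+1) - monom c (n+2) - [:al, be:])) (1::real)
   = (x - 1) - a * x - b * (x+1) - c*(x+2) - be"
  using assms by (simp add: poly_monom pderiv_monom pderiv_pCons pderiv_diff)
lemma gen2: assumes "m \<ge> 1" "n \<ge> 1" "x = real n" "real n = real m + 1"
  shows "poly (pderiv (pderiv (monom 1 m - monom a n - monom b (n+1) - monom c (n+2) - [:al, be:]))) (1::real)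
   = (x - 1) * (x - 1 - 1) - a * x * (x - 1) - b * (x+1) * x - c*(x+2)*(x+1)"
  using assms by (simp add: poly_monom pderiv_monom pderiv_pCons pderiv_diff pderiv_add of_nat_diff)

lemma A0: fixes x::real assumes "x \<ge> 3" shows
 "1 - (1 - (2 * x + d) / (x * (x - 1))) - (d - g) / (x * (x + 1)) - g / ((x + 1) * (x + 2))
   - (-1 - d / (x * (x + 1)) - g / ((x + 1) * (x + 2))) - ((x + 1) / (x - 1) + d / (x * (x - 1)) + g / (x * (x + 1))) = 0"
proof -
  have h: "x * inverse x = 1" "(x - 1) * inverse (x-1) = 1" "(x+1) * inverse (x + 1) = 1" "(x+2) * inverse (x + 2) = 1" using assms by auto
  show ?thesis unfolding divide_inverse inverse_mult_distrib using h by algebra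
qed
lemma A1: fixes x::real assumes "x \<ge> 3" shows
 "(x - 1) - (1 - (2 * x + d) / (x * (x - 1))) * x - (d - g) / (x * (x + 1)) * (x+1) - g / ((x + 1) * (x + 2)) * (x+2)
    - ((x + 1) / (x - 1) + d / (x * (x - 1)) + g / (x * (x + 1))) = 0"
proof -
  have h: "x * inverse x = 1" "(x - 1) * inverse (x-1) = 1" "(x+1) * inverse (x + 1) = 1" "(x+2) * inverse (x + 2) = 1" using assms by auto
  show ?thesis unfolding divide_inverse inverse_mult_distrib using h by algebra
qed
lemma A2: fixes x::real assumes "x \<ge> 3" shows
 "(x - 1) * (x - 1 - 1) - (1 - (2 * x + d) / (x * (x - 1))) * x * (x - 1) - (d - g) / (x * (x + 1)) * (x+1) * x - g / ((x + 1) * (x + 2)) * (x+2) * (x+1) = 2"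
proof -
  have h: "x * inverse x = 1" "(x - 1) * inverse (x-1) = 1" "(x+1) * inverse (x + 1) = 1" "(x+2) * inverse (x + 2) = 1" using assms by auto
  show ?thesis unfolding divide_inverse inverse_mult_distrib using h by algebra
qed

lemma Q0: assumes "n \<ge> 3" shows "poly (Qpoly n g d) 1 = 0"
  unfolding Qform gen0 alpha_def beta_def by (rule A0) (use assms in simp)
lemma Q1: assumes "n \<ge> 3" shows "poly (pderiv (Qpoly n g d)) 1 = 0"
proof -
  have "real n = real (n - 1) + 1" using assms by (simp add: of_nat_diff)
  note e = gen1[OF refl this]
  show ?thesis unfolding Qform beta_def e by (rule A1) (use assms in simp)
qed
lemma Q2: assumes "n \<ge> 3" shows "poly (pderiv (pderiv (Qpoly n g d))) 1 = 2"
proof -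
  have h: "n - 1 \<ge> 1" "n \<ge> 1" "real n = real (n - 1) + 1" using assms by (auto simp: of_nat_diff)
  note e = gen2[OF h(1) h(2) refl h(3)]
  show ?thesis unfolding Qform e by (rule A2) (use assms in simp)
qed

lemma fact2:
  fixes p :: "real poly" assumes "poly p 1 = 0" "poly (pderiv p) 1 = 0"
  obtains r where "p = [:-1,1:]^2 * r" "poly (pderiv (pderiv p)) 1 = 2 * poly r 1"
proof -
  have "[:-1,1:] dvd p" using assms(1) poly_eq_0_iff_dvd[of p 1] by simp
  then obtain q where q: "p = [:-1,1:] * q" by blast
  have "poly (pderiv p) 1 = poly q 1" unfolding q by (simp add: pderiv_mult pderiv_pCons pderiv_diff)
  then have "[:-1,1:] dvd q" using assms(2) poly_eq_0_iff_dvd[of q 1] by simp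
  then obtain r where r: "q = [:-1,1:] * r" by blast
  have "p = [:-1,1:]^2 * r" unfolding q r by (simp only: power2_eq_square mult.assoc)
  moreover have "poly (pderiv (pderiv p)) 1 = 2 * poly r 1"
    unfolding q r by (simp add: pderiv_mult pderiv_pCons pderiv_add pderiv_diff)
  ultimately show ?thesis using that by blast
qed

lemma NQ: assumes "n \<ge> 1" shows "Npoly n g d + Qpoly n g d = monom 1 (n - 1) * [:-1,1:]^2"
proof -
  obtain k where n: "n = Suc k" using assms by (cases n) auto
  show ?thesis unfolding Npoly_def Qpoly_def n
    by (rule poly_ext) (simp add: poly_monom algebra_simps power2_eq_square)
qed

theorem lemma4p5:
  fixes n :: nat and \<gamma> \<delta> :: real
  assumes "n \<ge> 3"
  shows "[:-1, 1:] ^ 3 dvd Npoly n \<gamma> \<delta>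
    \<and> poly (Qpoly n \<gamma> \<delta>) 1 = 0
    \<and> poly (pderiv (Qpoly n \<gamma> \<delta>)) 1 = 0
    \<and> poly (pderiv (pderiv (Qpoly n \<gamma> \<delta>))) 1 = 2
    \<and> order 1 (Qpoly n \<gamma> \<delta>) = 2 
    \<and> (\<exists>L. ((\<lambda>\<rho>. poly (Npoly n \<gamma> \<delta>) \<rho> / ((1 - \<rho>) * \<rho> * poly (Qpoly n \<gamma> \<delta>) \<rho>))
               \<longlongrightarrow> L) (at 1))"
proof -
  define Q where "Q = Qpoly n \<gamma> \<delta>"
  define N where "N = Npoly n \<gamma> \<delta>"
  have q0: "poly Q 1 = 0" and q1: "poly (pderiv Q) 1 = 0" and q2: "poly (pderiv (pderiv Q)) 1 = 2"
    unfolding Q_def using Q0 Q1 Q2 assms by auto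
  obtain R where QR: "Q = [:-1,1:]^2 * R" and "poly (pderiv (pderiv Q)) 1 = 2 * poly R 1"
    using fact2[OF q0 q1] by blast
  with q2 have R1: "poly R 1 = 1" by simp
  have "N = monom 1 (n - 1) * [:-1,1:]^2 - Q" using NQ[of n \<gamma> \<delta>] assms unfolding N_def Q_def
    by (simp add: algebra_simps)
  also have "\<dots> = [:-1,1:]^2 * (monom 1 (n - 1) - R)" unfolding QR by (simp add: algebra_simps)
  finally have N2: "N = [:-1,1:]^2 * (monom 1 (n - 1) - R)" .
  have "poly (monom 1 (n - 1) - R) 1 = 0" using R1 by (simp add: poly_monom)
  then have "[:-1,1:] dvd (monom 1 (n - 1) - R)" using poly_eq_0_iff_dvd[of "monom 1 (n - 1) - R" 1] by simp
  then obtain S where S: "monom 1 (n - 1) - R = [:-1,1:] * S" by blast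
  have c3: "[:-1,1:]^3 = [:-1,1:]^2 * [:-1,1::real:]" by (metis power2_eq_square power3_eq_cube)
  have NS: "N = [:-1,1:]^3 * S" unfolding N2 S c3 by (simp only: mult.assoc)
  have Rnz: "R \<noteq> 0" using R1 by auto
  have ord: "order 1 Q = 2"
  proof -
    have "order 1 Q = order 1 ([:-1,1::real:]^2) + order 1 R"
      unfolding QR using order_mult[of "[:-1,1:]^2" R 1] Rnz by auto
    also have "order 1 ([:-1,1::real:]^2) = 2" using order_power_n_n[of "1::real" 2] by simp
    also have "order 1 R = 0" using R1 by (intro order_0I) simp
    finally show ?thesis by simp
  qed
  define G where "G = (\<lambda>\<rho>::real. - poly S \<rho> / (\<rho> * poly R \<rho>))"
  have "isCont G 1" unfolding G_def using R1 by (intro continuous_intros) auto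
  then have G: "(G \<longlongrightarrow> G 1) (at 1)" by (simp add: isCont_def)
  have pt: "G \<rho> = poly N \<rho> / ((1 - \<rho>) * \<rho> * poly Q \<rho>)" if "\<rho> \<noteq> 1" for \<rho>
  proof -
    have a: "poly N \<rho> = (\<rho> - 1)^3 * poly S \<rho>" "poly Q \<rho> = (\<rho> - 1)^2 * poly R \<rho>"
      unfolding NS QR by simp_all
    have b: "\<rho> - 1 \<noteq> 0" "1 - \<rho> \<noteq> 0" using that by auto
    show ?thesis
    proof (cases "\<rho> * poly R \<rho> = 0")
      case True then show ?thesis by (auto simp: a G_def)
    next
      case False then show ?thesis using b
        by (simp add: a G_def divide_simps) (simp add: algebra_simps power2_eq_square power3_eq_cube)
    qed
  qed
  have ev: "\<forall>\<^sub>F \<rho> in at 1. G \<rho> = poly N \<rho> / ((1 - \<rho>) * \<rho> * poly Q \<rho>)"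
    unfolding eventually_at_filter by (rule always_eventually) (auto intro: pt)
  have lim: "((\<lambda>\<rho>. poly N \<rho> / ((1 - \<rho>) * \<rho> * poly Q \<rho>)) \<longlongrightarrow> G 1) (at 1)"
    using tendsto_cong[OF ev] G by simp
  show ?thesis unfolding N_def[symmetric] Q_def[symmetric]
    using NS q0 q1 q2 ord lim by auto
qed

end
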